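(* For every integer $t\geq 2$ there exist a connected graph $G$ and a function $g:A\to B$ such that $fix(G)=t=fix(F_G)$.
   Context: A set $S\subseteq V(H)$ is a fixing set of a graph $H$ if the only automorphism of $H$ fixing every vertex of $S$ is the identity; $fix(H)$ is the minimum cardinality of a fixing set of $H$. Functigraph: let $G_1,G_2$ be disjoint copies of a connected graph $G$, with $A=V(G_1)$, $B=V(G_2)$, and let $g:A\to B$ be a function. The functigraph $F_G$ has vertex set $A\cup B$ and edge set $E(G_1)\cup E(G_2)\cup\{ug(u):u\in A\}$. *)

theory Defs
  imports Main
begin

definition simple_graph :: "'a set \<Rightarrow> 'a set set \<Rightarrow> bool" where
  "simple_graph V E \<longleftrightarrow> finite V \<and> (\<forall>e\<in>E. \<exists>u v. e = {u, v} \<and> u \<noteq> v \<and> u \<in> V \<and> v \<in> V)"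

definition adj :: "'a set set \<Rightarrow> 'a \<Rightarrow> 'a \<Rightarrow> bool" where
  "adj E u v \<longleftrightarrow> {u, v} \<in> E"

definition connected_graph :: "'a set \<Rightarrow> 'a set set \<Rightarrow> bool" where
  "connected_graph V E \<longleftrightarrow> V \<noteq> {} \<and>
     (\<forall>u\<in>V. \<forall>v\<in>V. (\<lambda>x y. adj E x y \<and> x \<in> V \<and> y \<in> V)\<^sup>*\<^sup>* u v)"

definition automorphism :: "'a set \<Rightarrow> 'a set set \<Rightarrow> ('a \<Rightarrow> 'a) \<Rightarrow> bool" where
  "automorphism V E f \<longleftrightarrow> bij_betw f V V \<and>
     (\<forall>u\<in>V. \<forall>v\<in>V. adj E u v \<longleftrightarrow> adj E (f u) (f v))"

definition fixing_set :: "'a set \<Rightarrow> 'a set set \<Rightarrow> 'a set \<Rightarrow> bool" where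
  "fixing_set V E S \<longleftrightarrow> S \<subseteq> V \<and>
     (\<forall>f. automorphism V E f \<and> (\<forall>x\<in>S. f x = x) \<longrightarrow> (\<forall>x\<in>V. f x = x))"

definition fix_num :: "'a set \<Rightarrow> 'a set set \<Rightarrow> nat" where
  "fix_num V E = (LEAST k. \<exists>S. fixing_set V E S \<and> card S = k)"

text \<open>Functigraph: copies G1 = Inl ` V (A) and G2 = Inr ` V (B), plus edges u g(u).\<close>
definition functi_V :: "'a set \<Rightarrow> ('a + 'a) set" where
  "functi_V V = Inl ` V \<union> Inr ` V"

definition functi_E :: "'a set \<Rightarrow> 'a set set \<Rightarrow> ('a \<Rightarrow> 'a) \<Rightarrow> ('a + 'a) set set" where
  "functi_E V E g = (image Inl ` E) \<union> (image Inr ` E) \<union> {{Inl u, Inr (g u)} | u. u \<in> V}"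

end

theory Submission
  imports Defs
begin

lemma fix_num_eq:
  assumes "fixing_set V E S0" "card S0 = t"
    and "\<And>S. fixing_set V E S \<Longrightarrow> t \<le> card S"
  shows "fix_num V E = t"
  unfolding fix_num_def
  apply (rule Least_equality)
  using assms by auto

definition KV :: "nat \<Rightarrow> nat set" where "KV t = {0..t}"
definition KE :: "nat \<Rightarrow> nat set set" where
  "KE t = {{u,v} | u v. u \<in> KV t \<and> v \<in> KV t \<and> u \<noteq> v}"

lemma adjK: "u \<in> KV t \<Longrightarrow> v \<in> KV t \<Longrightarrow> adj (KE t) u v \<longleftrightarrow> u \<noteq> v"
  unfolding adj_def KE_def by (auto simp: doubleton_eq_iff)

lemma memInl: "(Inl ` A :: ('a + 'a) set) \<in> image Inl ` E \<longleftrightarrow> A \<in> E"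
proof
  assume h: "(Inl ` A :: ('a + 'a) set) \<in> image Inl ` E"
  obtain e where e: "(Inl ` A :: ('a + 'a) set) = Inl ` e" "e \<in> E" using h by (metis imageE)
  then have "A = e" by (simp add: inj_image_eq_iff)
  then show "A \<in> E" using e by simp
next
  assume "A \<in> E" then show "(Inl ` A :: ('a + 'a) set) \<in> image Inl ` E" by (rule imageI)
qed
lemma memInr: "(Inr ` A :: ('a + 'a) set) \<in> image Inr ` E \<longleftrightarrow> A \<in> E"
proof
  assume h: "(Inr ` A :: ('a + 'a) set) \<in> image Inr ` E"
  obtain e where e: "(Inr ` A :: ('a + 'a) set) = Inr ` e" "e \<in> E" using h by (metis imageE)
  then have "A = e" by (simp add: inj_image_eq_iff)
  then show "A \<in> E" using e by simp
next
  assume "A \<in> E" then show "(Inr ` A :: ('a + 'a) set) \<in> image Inr ` E" by (rule imageI)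
qed
lemma notInr:
  fixes S :: "('a + 'a) set"
  shows "Inl a \<in> S \<Longrightarrow> S \<notin> image Inr ` E"
proof
  assume a: "Inl a \<in> S" and h: "S \<in> image Inr ` E"
  from h obtain e where "S = Inr ` e" by (rule imageE)
  with a have "Inl a \<in> Inr ` e" by simp
  then show False by (rule imageE) simp
qed
lemma notInl:
  fixes S :: "('a + 'a) set"
  shows "Inr a \<in> S \<Longrightarrow> S \<notin> image Inl ` E"
proof
  assume a: "Inr a \<in> S" and h: "S \<in> image Inl ` E"
  from h obtain e where "S = Inl ` e" by (rule imageE)
  with a have "Inr a \<in> Inl ` e" by simp
  then show False by (rule imageE) simp
qed
lemma memCross:
  fixes S :: "('a + 'a) set"
  shows "S \<in> {{Inl w, Inr (g w)} | w. w \<in> V} \<longleftrightarrow> (\<exists>w. S = {Inl w, Inr (g w)} \<and> w \<in> V)"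
  by (simp only: mem_Collect_eq)
lemma notCrossL:
  fixes S :: "('a + 'a) set"
  shows "\<forall>y. Inr y \<notin> S \<Longrightarrow> S \<notin> {{Inl w, Inr (g w)} | w. w \<in> V}"
  unfolding memCross by auto
lemma notCrossR:
  fixes S :: "('a + 'a) set"
  shows "\<forall>y. Inl y \<notin> S \<Longrightarrow> S \<notin> {{Inl w, Inr (g w)} | w. w \<in> V}"
  unfolding memCross by auto
lemma adj_ll: "adj (functi_E V E g) (Inl u) (Inl v) \<longleftrightarrow> adj E u v"
proof -
  have 1: "({Inl u, Inl v} :: ('a + 'a) set) \<in> image Inl ` E \<longleftrightarrow> {u,v} \<in> E" using memInl[of "{u,v}" E] by simp
  have 2: "({Inl u, Inl v} :: ('a + 'a) set) \<notin> image Inr ` E" by (rule notInr[of u]) simp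
  have 3: "({Inl u, Inl v} :: ('a + 'a) set) \<notin> {{Inl w, Inr (g w)} | w. w \<in> V}" by (rule notCrossL) simp
  show ?thesis unfolding adj_def functi_E_def Un_iff using 1 2 3 by argo
qed
lemma adj_rr: "adj (functi_E V E g) (Inr u) (Inr v) \<longleftrightarrow> adj E u v"
proof -
  have 1: "({Inr u, Inr v} :: ('a + 'a) set) \<in> image Inr ` E \<longleftrightarrow> {u,v} \<in> E" using memInr[of "{u,v}" E] by simp
  have 2: "({Inr u, Inr v} :: ('a + 'a) set) \<notin> image Inl ` E" by (rule notInl[of u]) simp
  have 3: "({Inr u, Inr v} :: ('a + 'a) set) \<notin> {{Inl w, Inr (g w)} | w. w \<in> V}" by (rule notCrossR) simp
  show ?thesis unfolding adj_def functi_E_def Un_iff using 1 2 3 by argo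
qed
lemma adj_lr: "adj (functi_E V E g) (Inl u) (Inr v) \<longleftrightarrow> u \<in> V \<and> v = g u"
proof -
  have 2: "({Inl u, Inr v} :: ('a + 'a) set) \<notin> image Inl ` E" by (rule notInl[of v]) simp
  have 4: "({Inl u, Inr v} :: ('a + 'a) set) \<notin> image Inr ` E" by (rule notInr[of u]) simp
  have 3: "({Inl u, Inr v} :: ('a + 'a) set) \<in> {{Inl w, Inr (g w)} | w. w \<in> V} \<longleftrightarrow> u \<in> V \<and> v = g u"
    unfolding memCross by (auto simp: doubleton_eq_iff)
  show ?thesis unfolding adj_def functi_E_def Un_iff using 2 4 3 by argo
qed
lemma adj_sym: "adj E u v \<longleftrightarrow> adj E v u" unfolding adj_def by (simp add: insert_commute)
lemma adj_rl: "adj (functi_E V E g) (Inr v) (Inl u) \<longleftrightarrow> u \<in> V \<and> v = g u"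
  using adj_lr[of V E g u v] adj_sym[of "functi_E V E g" "Inr v" "Inl u"] by simp

definition sw :: "nat \<Rightarrow> nat \<Rightarrow> nat \<Rightarrow> nat" where
  "sw i j x = (if x = i then j else if x = j then i else x)"

lemma sw_bij: "i \<in> A \<Longrightarrow> j \<in> A \<Longrightarrow> bij_betw (sw i j) A A"
  unfolding bij_betw_def inj_on_def sw_def
  by (auto simp: image_def split: if_splits)

lemma sw_mem: "i \<in> A \<Longrightarrow> j \<in> A \<Longrightarrow> x \<in> A \<Longrightarrow> sw i j x \<in> A"
  unfolding sw_def by auto

lemma sw_inj: "sw i j x = sw i j y \<longleftrightarrow> x = y"
  unfolding sw_def by auto

lemma two_out:
  assumes "finite A" "P \<subseteq> A" "card P + 2 \<le> card A"
  shows "\<exists>i j. i \<in> A - P \<and> j \<in> A - P \<and> i \<noteq> j"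
proof -
  have "card (A - P) = card A - card P" using card_Diff_subset[OF finite_subset[OF assms(2,1)] assms(2)] .
  then have c2: "card (A - P) \<ge> 2" using assms(3) by linarith
  have "A - P \<noteq> {}"
  proof
    assume "A - P = {}" then have "card (A - P) = 0" by (simp only: card.empty)
    then show False using c2 by linarith
  qed
  then obtain i where i: "i \<in> A - P" by blast
  have "card (A - P - {i}) = card (A - P) - 1" using card_Diff_singleton[OF i] .
  then have c1: "card (A - P - {i}) \<ge> 1" using c2 by linarith
  have "A - P - {i} \<noteq> {}"
  proof
    assume "A - P - {i} = {}" then have "card (A - P - {i}) = 0" by (simp only: card.empty)
    then show False using c1 by linarith
  qed
  then obtain j where "j \<in> A - P - {i}" by blast
  then show ?thesis using i by blast
qed

lemma cardKV: "card (KV t) = Suc t" unfolding KV_def by simp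

lemma fixK: assumes "t \<ge> 2" shows "fix_num (KV t) (KE t) = t"
proof (rule fix_num_eq)
  show "fixing_set (KV t) (KE t) {1..t}"
    unfolding fixing_set_def
  proof (intro conjI allI impI)
    show "{1..t} \<subseteq> KV t" unfolding KV_def by auto
    fix f assume a: "automorphism (KV t) (KE t) f \<and> (\<forall>x\<in>{1..t}. f x = x)"
    then have b: "bij_betw f (KV t) (KV t)" unfolding automorphism_def by auto
    have f0: "f 0 = 0"
    proof (rule ccontr)
      assume "f 0 \<noteq> 0"
      moreover have "f 0 \<in> KV t" using b unfolding KV_def bij_betw_def by auto
      ultimately have "f 0 \<in> {1..t}" unfolding KV_def by auto
      then have "f (f 0) = f 0" using a by auto
      moreover have "inj_on f (KV t)" using b unfolding bij_betw_def by simp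
      moreover have "0 \<in> KV t" unfolding KV_def by simp
      ultimately have "f 0 = 0" using \<open>f 0 \<in> KV t\<close> inj_onD[of f "KV t" "f 0" 0] by blast
      with \<open>f 0 \<noteq> 0\<close> show False by simp
    qed
    show "\<forall>x\<in>KV t. f x = x"
    proof
      fix x assume "x \<in> KV t"
      show "f x = x"
      proof (cases "x = 0")
        case True then show ?thesis using f0 by simp
      next
        case False then have "x \<in> {1..t}" using \<open>x \<in> KV t\<close> unfolding KV_def by auto
        then show ?thesis using a by blast
      qed
    qed
  qed
  show "card {1..t} = t" by simp
  fix S assume fs: "fixing_set (KV t) (KE t) S"
  show "t \<le> card S"
  proof (rule ccontr)
    assume "\<not> t \<le> card S"
    then have c: "card S + 2 \<le> card (KV t)" using cardKV by simp
    have sub: "S \<subseteq> KV t" using fs unfolding fixing_set_def by auto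
    obtain i j where ij: "i \<in> KV t - S" "j \<in> KV t - S" "i \<noteq> j"
      using two_out[OF _ sub c] unfolding KV_def by auto
    have "automorphism (KV t) (KE t) (sw i j)"
      unfolding automorphism_def
      using ij sw_bij[of i "KV t" j]
      by (simp add: adjK sw_inj sw_mem)
    moreover have "\<forall>x\<in>S. sw i j x = x" using ij unfolding sw_def by auto
    moreover have "\<forall>f. automorphism (KV t) (KE t) f \<and> (\<forall>x\<in>S. f x = x) \<longrightarrow> (\<forall>x\<in>KV t. f x = x)"
      using fs unfolding fixing_set_def by simp
    ultimately have "\<forall>x\<in>KV t. sw i j x = x" by blast
    then have "sw i j i = i" using ij(1) by blast
    then show False using ij(3) unfolding sw_def by simp
  qed
qed


lemma sw_sw: "sw i j (sw i j x) = x" unfolding sw_def by auto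

lemma fixF: assumes "t \<ge> 2"
  shows "fix_num (functi_V (KV t)) (functi_E (KV t) (KE t) id) = t"
proof (rule fix_num_eq)
  let ?V = "functi_V (KV t)" and ?E = "functi_E (KV t) (KE t) id"
  show "fixing_set ?V ?E (Inl ` {1..t})"
    unfolding fixing_set_def
  proof (intro conjI allI impI)
    show "Inl ` {1..t} \<subseteq> ?V" unfolding KV_def functi_V_def by auto
    fix f assume a: "automorphism ?V ?E f \<and> (\<forall>x\<in>Inl ` {1..t}. f x = x)"
    then have b: "bij_betw f ?V ?V" unfolding automorphism_def by auto
    have inj: "inj_on f ?V" using b unfolding bij_betw_def by simp
    have mem: "\<And>x. x \<in> ?V \<Longrightarrow> f x \<in> ?V" using b bij_betwE by blast
    have ad: "\<And>u v. u \<in> ?V \<Longrightarrow> v \<in> ?V \<Longrightarrow> adj ?E u v \<longleftrightarrow> adj ?E (f u) (f v)"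
      using a unfolding automorphism_def by blast
    have fix1: "\<And>k. k \<in> {1..t} \<Longrightarrow> f (Inl k) = Inl k" using a by blast
    have KV0: "0 \<in> KV t" and KV1: "1 \<in> KV t" and KV2: "2 \<in> KV t" using assms unfolding KV_def by auto
    have V0: "Inl 0 \<in> ?V" "Inl 1 \<in> ?V" "Inl 2 \<in> ?V" using KV0 KV1 KV2 unfolding functi_V_def by auto
    have f0: "f (Inl 0) = Inl 0"
    proof -
      have m: "f (Inl 0) \<in> ?V" using mem V0 by blast
      have "adj ?E (Inl 0) (Inl 1)" using adjK[OF KV0 KV1] by (simp add: adj_ll)
      then have "adj ?E (f (Inl 0)) (f (Inl 1))" using ad[OF V0(1) V0(2)] by blast
      moreover have "f (Inl 1) = Inl 1" using fix1[of 1] assms by simp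
      ultimately have a1: "adj ?E (f (Inl 0)) (Inl 1)" by simp
      have "adj ?E (Inl 0) (Inl 2)" using adjK[OF KV0 KV2] by (simp add: adj_ll)
      then have "adj ?E (f (Inl 0)) (f (Inl 2))" using ad[OF V0(1) V0(3)] by blast
      moreover have "f (Inl 2) = Inl 2" using fix1[of 2] assms by simp
      ultimately have a2: "adj ?E (f (Inl 0)) (Inl 2)" by simp
      show ?thesis
      proof (cases "f (Inl 0)")
        case (Inl k)
        then have k: "k \<in> KV t" using m unfolding functi_V_def by auto
        show ?thesis
        proof (cases "k = 0")
          case True then show ?thesis using Inl by simp
        next
          case False
          then have "k \<in> {1..t}" using k unfolding KV_def by auto
          then have "f (Inl k) = f (Inl 0)" using fix1 Inl by simp
          moreover have "Inl k \<in> ?V" using k unfolding functi_V_def by auto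
          ultimately have "Inl k = (Inl 0 :: nat + nat)" using inj V0(1) inj_onD by metis
          then show ?thesis using False by simp
        qed
      next
        case (Inr k)
        then have "1 = k" "2 = k" using a1 a2 by (auto simp: adj_rl)
        then show ?thesis by simp
      qed
    qed
    have fl: "\<And>k. k \<in> KV t \<Longrightarrow> f (Inl k) = Inl k"
    proof -
      fix k assume "k \<in> KV t"
      then show "f (Inl k) = Inl k"
        using f0 fix1[of k] unfolding KV_def by (cases "k = 0") auto
    qed
    show "\<forall>x\<in>?V. f x = x"
    proof
      fix x assume x: "x \<in> ?V"
      show "f x = x"
      proof (cases x)
        case (Inl k) then show ?thesis using fl x unfolding functi_V_def by auto
      next
        case (Inr j)
        then have j: "j \<in> KV t" using x unfolding functi_V_def by auto
        have lj: "Inl j \<in> ?V" using j unfolding functi_V_def by auto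
        have "adj ?E (Inl j) (Inr j)" using j by (simp add: adj_lr)
        then have aj: "adj ?E (Inl j) (f (Inr j))" using ad[OF lj x] fl[OF j] Inr by simp
        have m: "f (Inr j) \<in> ?V" using mem x Inr by blast
        show ?thesis
        proof (cases "f (Inr j)")
          case (Inl k)
          then have k: "k \<in> KV t" using m unfolding functi_V_def by auto
          have "Inl k \<in> ?V" using k unfolding functi_V_def by auto
          moreover have "f (Inl k) = f (Inr j)" using fl[OF k] Inl by simp
          ultimately have "Inl k = (Inr j :: nat + nat)" using inj x Inr inj_onD by metis
          then show ?thesis by simp
        next
          case (Inr k) then show ?thesis using aj \<open>x = Inr j\<close> by (auto simp: adj_lr)
        qed
      qed
    qed
  qed
  show "card (Inl ` {1..t} :: (nat + nat) set) = t" by (simp add: card_image)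
  fix S assume fs: "fixing_set ?V ?E S"
  show "t \<le> card S"
  proof (rule ccontr)
    assume lt: "\<not> t \<le> card S"
    have sub: "S \<subseteq> ?V" using fs unfolding fixing_set_def by auto
    have finV: "finite ?V" unfolding functi_V_def KV_def by simp
    define P where "P = case_sum id id ` S"
    have "card P \<le> card S" unfolding P_def using card_image_le finite_subset[OF sub finV] by blast
    then have c: "card P + 2 \<le> card (KV t)" using cardKV lt by simp
    have subP: "P \<subseteq> KV t" using sub unfolding P_def functi_V_def by auto
    obtain i j where ij: "i \<in> KV t - P" "j \<in> KV t - P" "i \<noteq> j"
      using two_out[OF _ subP c] unfolding KV_def by auto
    define F where "F = map_sum (sw i j) (sw i j)"
    have FF: "\<And>x. F (F x) = x" unfolding F_def by (case_tac x) (auto simp: sw_sw)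
    have Fm: "\<And>x. x \<in> ?V \<Longrightarrow> F x \<in> ?V"
      unfolding F_def functi_V_def using ij sw_mem[of i "KV t" j] by auto
    have "bij_betw F ?V ?V"
      by (rule bij_betw_byWitness[where f'=F]) (use FF Fm in auto)
    moreover have "\<forall>u\<in>?V. \<forall>v\<in>?V. adj ?E u v \<longleftrightarrow> adj ?E (F u) (F v)"
    proof (intro ballI)
      fix u v assume u: "u \<in> ?V" and v: "v \<in> ?V"
      show "adj ?E u v \<longleftrightarrow> adj ?E (F u) (F v)"
      proof (cases u)
        case (Inl a)
        then have a: "a \<in> KV t" using u unfolding functi_V_def by auto
        show ?thesis
        proof (cases v)
          case (Inl b)
          then have b: "b \<in> KV t" using v unfolding functi_V_def by auto
          show ?thesis using \<open>u = Inl a\<close> Inl a b ij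
            by (simp add: F_def adj_ll adjK sw_mem sw_inj)
        next
          case (Inr b)
          then have b: "b \<in> KV t" using v unfolding functi_V_def by auto
          show ?thesis using \<open>u = Inl a\<close> Inr a b ij
            by (simp add: F_def adj_lr sw_mem sw_inj)
        qed
      next
        case (Inr a)
        then have a: "a \<in> KV t" using u unfolding functi_V_def by auto
        show ?thesis
        proof (cases v)
          case (Inl b)
          then have b: "b \<in> KV t" using v unfolding functi_V_def by auto
          show ?thesis using \<open>u = Inr a\<close> Inl a b ij
            by (simp add: F_def adj_rl sw_mem sw_inj)
        next
          case (Inr b)
          then have b: "b \<in> KV t" using v unfolding functi_V_def by auto
          show ?thesis using \<open>u = Inr a\<close> Inr a b ij
            by (simp add: F_def adj_rr adjK sw_mem sw_inj)
        qed
      qed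
    qed
    ultimately have aut: "automorphism ?V ?E F" unfolding automorphism_def by blast
    have "\<forall>x\<in>S. F x = x"
    proof
      fix x assume x: "x \<in> S"
      have "case_sum id id x \<in> P" unfolding P_def using x by blast
      then have "case_sum id id x \<noteq> i" "case_sum id id x \<noteq> j" using ij by auto
      then show "F x = x" unfolding F_def sw_def by (cases x) auto
    qed
    moreover have "\<forall>f. automorphism ?V ?E f \<and> (\<forall>x\<in>S. f x = x) \<longrightarrow> (\<forall>x\<in>?V. f x = x)"
      using fs unfolding fixing_set_def by simp
    ultimately have all: "\<forall>x\<in>?V. F x = x" using aut by blast
    have "Inl i \<in> ?V" using ij unfolding functi_V_def by auto
    then have "F (Inl i) = Inl i" using all by blast
    then have "sw i j i = i" unfolding F_def by simp
    then show False using ij(3) unfolding sw_def by simp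
  qed
qed

lemma KE_simple: "simple_graph (KV t) (KE t)"
  unfolding simple_graph_def KE_def KV_def by auto

lemma KE_conn: "connected_graph (KV t) (KE t)"
  unfolding connected_graph_def
proof (intro conjI ballI)
  show "KV t \<noteq> {}" unfolding KV_def by auto
  fix u v assume u: "u \<in> KV t" and v: "v \<in> KV t"
  show "(\<lambda>x y. adj (KE t) x y \<and> x \<in> KV t \<and> y \<in> KV t)\<^sup>*\<^sup>* u v"
  proof (cases "u = v")
    case True then show ?thesis by simp
  next
    case False then show ?thesis using u v adjK[OF u v] by (intro r_into_rtranclp) simp
  qed
qed

theorem lemma2p6:
  fixes t :: nat
  assumes "t \<ge> 2"
  shows "\<exists>(V :: nat set) E g. simple_graph V E \<and> connected_graph V E \<and> g ` V \<subseteq> V \<and>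
           fix_num V E = t \<and> fix_num (functi_V V) (functi_E V E g) = t"
  using KE_simple KE_conn fixK[OF assms] fixF[OF assms] by (intro exI[of _ "KV t"] exI[of _ "KE t"] exI[of _ id]) auto

end
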